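(* Let $G=(V,E,w)$ be a connected undirected graph with positive edge weights, let $v\in V$, and let $E_v$ be a set of node pairs $\{u,v\}$ with $u\neq v$ and $\{u,v\}\notin E$, each $e\in E_v$ having a given positive weight $w(e)$. For $S\subseteq E_v$ let $\mathcal{R}(S)$ denote the resistance distance of $v$ in the augmented graph $G(S)$. Then $\mathcal{R}$ is supermodular: for any sets $S\subseteq T\subseteq E_v$ and any edge $e\in E_v\setminus T$, $$\mathcal{R}(T)-\mathcal{R}(T\cup\{e\})\le \mathcal{R}(S)-\mathcal{R}(S\cup\{e\}).$$
   Context: For a connected weighted graph $H$ on node set $V$ with $|V|=n$, its Laplacian is $\mathbf{L}=\mathbf{D}-\mathbf{A}$, where $\mathbf{A}$ is the weighted adjacency matrix and $\mathbf{D}$ the diagonal matrix of weighted degrees; $\mathbf{L}^\dagger$ denotes its Moore–Penrose pseudoinverse. For nodes $a,b$ let $\mathbf{b}_{a,b}=\mathbf{e}_a-\mathbf{e}_b$. The resistance distance between $a$ and $b$ is $\mathcal{R}_{ab}=\mathbf{b}_{a,b}^\top\mathbf{L}^\dagger\mathbf{b}_{a,b}$, and the resistance distance of node $v$ is $\mathcal{R}_v=\sum_{u\in V}\mathcal{R}_{uv}$. For $S\subseteq E_v$, $G(S)=(V,E\cup S,w')$ is the graph obtained by adding the edges of $S$ with their given weights. *)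

theory Defs
  imports "HOL-Analysis.Analysis"
begin

text \<open>Undirected weighted graphs on a finite node type 'n. An edge is a two-element
set of nodes; E is the edge set and w assigns weights to (unordered) node pairs.\<close>

definition wadj :: "'n set set \<Rightarrow> ('n set \<Rightarrow> real) \<Rightarrow> 'n \<Rightarrow> 'n \<Rightarrow> real" where
  "wadj E w a b = (if {a, b} \<in> E then w {a, b} else 0)"

definition laplacian :: "'n::finite set set \<Rightarrow> ('n set \<Rightarrow> real) \<Rightarrow> real^'n^'n" where
  "laplacian E w = (\<chi> i j. (if i = j then (\<Sum>k\<in>UNIV. wadj E w i k) else 0) - wadj E w i j)"

definition is_mp_pinv :: "real^'n^'n \<Rightarrow> real^'n^'n \<Rightarrow> bool" where
  "is_mp_pinv A X \<longleftrightarrow> A ** X ** A = A \<and> X ** A ** X = X \<and>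
     transpose (A ** X) = A ** X \<and> transpose (X ** A) = X ** A"

definition mp_pinv :: "real^'n^'n \<Rightarrow> real^'n^'n" where
  "mp_pinv A = (THE X. is_mp_pinv A X)"

definition bvec :: "'n::finite \<Rightarrow> 'n \<Rightarrow> real^'n" where
  "bvec a b = axis a 1 - axis b 1"

definition resistance :: "'n::finite set set \<Rightarrow> ('n set \<Rightarrow> real) \<Rightarrow> 'n \<Rightarrow> 'n \<Rightarrow> real" where
  "resistance E w a b = bvec a b \<bullet> (mp_pinv (laplacian E w) *v bvec a b)"

definition node_resistance :: "'n::finite set set \<Rightarrow> ('n set \<Rightarrow> real) \<Rightarrow> 'n \<Rightarrow> real" where
  "node_resistance E w v = (\<Sum>u\<in>UNIV. resistance E w u v)"

definition connected_graph :: "'n set set \<Rightarrow> bool" where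
  "connected_graph E \<longleftrightarrow> (\<forall>a b. (a, b) \<in> {(x, y). {x, y} \<in> E}\<^sup>*)"

end

theory Submission
  imports Defs
begin

lemma wadj_sym: "wadj E w a b = wadj E w b a"
  by (simp add: wadj_def insert_commute)

lemma laplacian_entry: "laplacian E w $ i $ j = (if i = j then (\<Sum>k\<in>UNIV. wadj E w i k) else 0) - wadj E w i j"
  by (simp add: laplacian_def)

lemma laplacian_mulv: "(laplacian E w *v x) $ i = (\<Sum>k\<in>UNIV. wadj E w i k * (x$i - x$k))"
proof -
  have 1: "(laplacian E w *v x) $ i = (\<Sum>j\<in>UNIV. ((if i = j then (\<Sum>k\<in>UNIV. wadj E w i k) else 0) - wadj E w i j) * x$j)"
    by (simp add: matrix_vector_mult_def laplacian_def)
  have 2: "\<dots> = (\<Sum>j\<in>UNIV. (if i = j then (\<Sum>k\<in>UNIV. wadj E w i k) else 0) * x$j) - (\<Sum>j\<in>UNIV. wadj E w i j * x$j)"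
    by (simp add: left_diff_distrib sum_subtractf)
  have 3: "(\<Sum>j\<in>UNIV. (if i = j then (\<Sum>k\<in>UNIV. wadj E w i k) else 0) * x$j) = (\<Sum>k\<in>UNIV. wadj E w i k) * x$i"
    by (simp add: if_distrib if_distribR cong: if_cong)
  have 4: "(\<Sum>k\<in>UNIV. wadj E w i k) * x$i - (\<Sum>j\<in>UNIV. wadj E w i j * x$j) = (\<Sum>k\<in>UNIV. wadj E w i k * (x$i - x$k))"
    by (simp add: right_diff_distrib sum_subtractf sum_distrib_right)
  show ?thesis using 1 2 3 4 by simp
qed

lemma sum_laplacian_mulv: "(\<Sum>i\<in>UNIV. (laplacian E w *v x) $ i) = 0"
proof -
  have "(\<Sum>i\<in>UNIV. (laplacian E w *v x) $ i) = (\<Sum>i\<in>UNIV. \<Sum>k\<in>UNIV. wadj E w i k * x$i) - (\<Sum>i\<in>UNIV. \<Sum>k\<in>UNIV. wadj E w i k * x$k)"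
    by (simp add: laplacian_mulv right_diff_distrib sum_subtractf)
  also have "(\<Sum>i\<in>UNIV. \<Sum>k\<in>UNIV. wadj E w i k * x$k) = (\<Sum>k\<in>UNIV. \<Sum>i\<in>UNIV. wadj E w k i * x$k)"
    by (subst sum.swap) (simp add: wadj_sym)
  finally show ?thesis by simp
qed

lemma transpose_laplacian: "transpose (laplacian E w) = laplacian E w"
  by (simp add: transpose_def laplacian_def vec_eq_iff wadj_sym)

definition Mg :: "'n::finite set set \<Rightarrow> ('n set \<Rightarrow> real) \<Rightarrow> 'n \<Rightarrow> real^'n^'n" where
  "Mg E w v = (\<chi> i j. if i = v \<or> j = v then (if i = j then 1 else 0) else laplacian E w $ i $ j)"

lemma transpose_Mg: "transpose (Mg E w v) = Mg E w v"
  using transpose_laplacian[of E w]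
  by (auto simp add: transpose_def Mg_def vec_eq_iff)

definition zv :: "'n::finite \<Rightarrow> real^'n \<Rightarrow> real^'n" where
  "zv v z = (\<chi> k. if k = v then 0 else z$k)"

lemma Mg_row_v: "Mg E w v $ v $ j = (if j = v then 1 else 0)"
  by (simp add: Mg_def)

lemma Mg_mulv_v: "(Mg E w v *v z) $ v = z $ v"
proof -
  have "(Mg E w v *v z) $ v = (\<Sum>j\<in>UNIV. (if j = v then 1 else 0) * z$j)"
    by (simp only: matrix_vector_mult_def vec_lambda_beta Mg_row_v)
  also have "\<dots> = z$v" by (simp add: if_distrib[of "\<lambda>x. x * _"] cong: if_cong)
  finally show ?thesis .
qed

lemma Mg_mulv_nv: "i \<noteq> v \<Longrightarrow> (Mg E w v *v z) $ i = (laplacian E w *v zv v z) $ i"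
  unfolding matrix_vector_mult_def Mg_def zv_def
  by (auto intro!: sum.cong)

lemma wadj_nonneg: "\<forall>f\<in>E. w f > 0 \<Longrightarrow> wadj E w a b \<ge> 0"
  by (auto simp: wadj_def less_imp_le)

lemma wadj_pos: "\<forall>f\<in>E. w f > 0 \<Longrightarrow> {a, b} \<in> E \<Longrightarrow> wadj E w a b > 0"
  by (auto simp: wadj_def)

lemma zv_v [simp]: "zv v z $ v = 0" and zv_nv [simp]: "k \<noteq> v \<Longrightarrow> zv v z $ k = z $ k"
  by (auto simp: zv_def)

lemma maxprin:
  fixes E :: "'n::finite set set"
  assumes wpos: "\<forall>f\<in>E. w f > 0" and conn: "connected_graph E"
    and y: "\<forall>i. (Mg E w v *v z)$i \<ge> 0"
  shows "z$i \<ge> 0"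
proof -
  define z' where "z' = zv v z"
  have main: "\<forall>k. z'$k \<ge> 0"
  proof (rule ccontr)
    assume "\<not> (\<forall>k. z'$k \<ge> 0)"
    then obtain k0 where k0: "z'$k0 < 0" using not_le by blast
    define m where "m = Min (range (\<lambda>k. z'$k))"
    have mle: "\<And>k. m \<le> z'$k" unfolding m_def by (rule Min_le) auto
    have "m \<in> range (\<lambda>k. z'$k)" unfolding m_def by (rule Min_in) auto
    then obtain i where i: "z'$i = m" by auto
    have mneg: "m < 0" using mle[of k0] k0 by linarith
    have closed: "z'$b = m" if a: "z'$a = m" and ab: "{a, b} \<in> E" for a b
    proof -
      have av: "a \<noteq> v" using a mneg z'_def by auto
      have "0 \<le> (Mg E w v *v z)$a" using y by auto
      also have "\<dots> = (\<Sum>k\<in>UNIV. wadj E w a k * (z'$a - z'$k))"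
        using Mg_mulv_nv[OF av] laplacian_mulv z'_def by simp
      finally have s: "0 \<le> (\<Sum>k\<in>UNIV. wadj E w a k * (z'$a - z'$k))" .
      have le: "\<forall>k\<in>UNIV. wadj E w a k * (z'$a - z'$k) \<le> 0"
        using wadj_nonneg[OF wpos] mle a by (simp add: mult_nonneg_nonpos)
      then have "(\<Sum>k\<in>UNIV. wadj E w a k * (z'$a - z'$k)) \<le> 0" by (simp add: sum_nonpos)
      with s have "(\<Sum>k\<in>UNIV. wadj E w a k * (z'$a - z'$k)) = 0" by linarith
      then have "(\<Sum>k\<in>UNIV. - (wadj E w a k * (z'$a - z'$k))) = 0"
        by (simp add: sum_negf)
      moreover have "\<forall>k\<in>UNIV. - (wadj E w a k * (z'$a - z'$k)) \<ge> 0" using le by simp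
      ultimately have "\<forall>k\<in>UNIV. - (wadj E w a k * (z'$a - z'$k)) = 0"
        using sum_nonneg_eq_0_iff[of UNIV "\<lambda>k. - (wadj E w a k * (z'$a - z'$k))"] by simp
      then have "wadj E w a b * (z'$a - z'$b) = 0" by simp
      moreover have "wadj E w a b > 0" using wadj_pos[OF wpos ab] .
      ultimately show ?thesis using a by simp
    qed
    have "(i, v) \<in> {(x, y). {x, y} \<in> E}\<^sup>*" using conn unfolding connected_graph_def by blast
    then have "z'$v = m"
    proof (induction rule: rtrancl_induct)
      case base then show ?case using i .
    next
      case (step b c) then show ?case using closed by auto
    qed
    then show False using mneg z'_def by simp
  qed
  show ?thesis
  proof (cases "i = v")
    case True then show ?thesis using y Mg_mulv_v[of E w v z] by metis
  next
    case False then show ?thesis using main z'_def by (metis zv_nv)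
  qed
qed

lemma mulv_uminus: "(A::real^'n::finite^'m::finite) *v (- x) = - (A *v x)"
  by (simp add: vec_eq_iff matrix_vector_mult_def sum_negf)

lemma mulv_axis: "((A::real^'n::finite^'m::finite) *v axis j 1) $ i = A $ i $ j"
  by (simp add: matrix_vector_mult_def axis_def if_distrib[of "\<lambda>x. _ * x"] cong: if_cong)

lemma Mg_inv:
  fixes E :: "'n::finite set set"
  assumes wpos: "\<forall>f\<in>E. w f > 0" and conn: "connected_graph E"
  obtains N where "Mg E w v ** N = mat 1" "N ** Mg E w v = mat 1" "\<forall>i j. N$i$j \<ge> 0"
proof -
  have "\<forall>x. Mg E w v *v x = 0 \<longrightarrow> x = 0"
  proof (intro allI impI)
    fix x :: "real^'n" assume x: "Mg E w v *v x = 0"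
    have "\<And>i. x$i \<ge> 0" by (rule maxprin[OF wpos conn, where v=v]) (simp add: x)
    moreover have "\<And>i. (-x)$i \<ge> 0" by (rule maxprin[OF wpos conn, where v=v]) (simp add: x mulv_uminus)
    ultimately show "x = 0" by (simp add: vec_eq_iff) (meson antisym neg_le_0_iff_le)
  qed
  then obtain N where NM: "N ** Mg E w v = mat 1" using matrix_left_invertible_ker by blast
  then have MN: "Mg E w v ** N = mat 1" using matrix_left_right_inverse by blast
  have "N$i$j \<ge> 0" for i j
  proof -
    have "Mg E w v *v (N *v axis j 1) = axis j 1"
      by (simp add: matrix_vector_mul_assoc MN)
    then have "\<forall>k. (Mg E w v *v (N *v axis j 1))$k \<ge> 0" by (simp add: axis_def)
    then have "(N *v axis j 1)$i \<ge> 0" by (rule maxprin[OF wpos conn, where v=v])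
    then show ?thesis by (simp add: mulv_axis)
  qed
  then show ?thesis using that MN NM by blast
qed


type_synonym 'n mat = "real^'n^'n"

lemma mm_add_r: "((A::'n::finite mat) + B) ** C = A ** C + B ** C"
  by (simp add: matrix_matrix_mult_def vec_eq_iff sum.distrib ring_distribs)
lemma mm_add_l: "(A::'n::finite mat) ** (B + C) = A ** B + A ** C"
  by (simp add: matrix_matrix_mult_def vec_eq_iff sum.distrib ring_distribs)
lemma mm_diff_r: "((A::'n::finite mat) - B) ** C = A ** C - B ** C"
  by (simp add: matrix_matrix_mult_def vec_eq_iff sum_subtractf ring_distribs)
lemma mm_diff_l: "(A::'n::finite mat) ** (B - C) = A ** B - A ** C"
  by (simp add: matrix_matrix_mult_def vec_eq_iff sum_subtractf ring_distribs)
lemma transpose_diff: "transpose ((A::'n::finite mat) - B) = transpose A - transpose B"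
  by (simp add: transpose_def vec_eq_iff)
lemma mm_scale_l: "(c *\<^sub>R (A::'n::finite mat)) ** B = c *\<^sub>R (A ** B)"
  by (simp add: scalar_matrix_assoc)
lemma mm_scale_r: "(A::'n::finite mat) ** (c *\<^sub>R B) = c *\<^sub>R (A ** B)"
  by (simp add: matrix_matrix_mult_def vec_eq_iff sum_distrib_left mult_ac)

lemma inverse_symm:
  fixes M N :: "'n::finite mat"
  assumes "transpose M = M" "M ** N = mat 1" "N ** M = mat 1"
  shows "transpose N = N"
proof -
  have "transpose N ** M = mat 1"
    using assms matrix_transpose_mul[of M N] by simp
  then have "transpose N ** M ** N = N" by simp
  then show ?thesis using assms(2) by (simp add: matrix_mul_assoc[symmetric])
qed

definition Jm :: "'n::finite mat" where "Jm = (\<chi> i j. 1)"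
definition Ev1 :: "'n::finite \<Rightarrow> 'n mat" where "Ev1 v = (\<chi> i j. if i = v then 1 else 0)"
definition Qm :: "'n::finite mat" where "Qm = mat 1 - (1 / real CARD('n)) *\<^sub>R Jm"

lemma L_J: "laplacian E w ** Jm = 0"
proof -
  have "(laplacian E w ** Jm) $ i $ j = (laplacian E w *v (\<chi> k. 1)) $ i" for i j
    by (simp add: matrix_matrix_mult_def matrix_vector_mult_def Jm_def)
  also have "(laplacian E w *v (\<chi> k. 1)) $ i = 0" for i by (simp add: laplacian_mulv)
  finally show ?thesis by (simp add: vec_eq_iff)
qed

lemma transpose_J: "transpose Jm = Jm" by (simp add: transpose_def Jm_def vec_eq_iff)
lemma transpose_Q: "transpose Qm = Qm" by (simp add: Qm_def transpose_diff transpose_scalar transpose_J)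

lemma transpose_zero: "transpose (0::'n::finite mat) = 0"
  by (simp add: transpose_def vec_eq_iff)

lemma J_L: "Jm ** laplacian E w = 0"
proof -
  have "transpose (Jm ** laplacian E w) = 0"
    by (simp add: matrix_transpose_mul transpose_laplacian transpose_J L_J)
  then have "transpose (transpose (Jm ** laplacian E w)) = 0" by (simp add: transpose_zero)
  then show ?thesis by simp
qed

lemma J_J: "Jm ** Jm = real CARD('n::finite) *\<^sub>R (Jm :: 'n mat)"
  by (simp add: matrix_matrix_mult_def Jm_def vec_eq_iff)

lemma Ev1_J: "Ev1 v ** Jm = real CARD('n::finite) *\<^sub>R (Ev1 v :: 'n mat)"
  by (simp add: matrix_matrix_mult_def Jm_def Ev1_def vec_eq_iff)

lemma Q_Q: "Qm ** Qm = (Qm :: 'n::finite mat)"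
proof -
  have n: "real CARD('n) \<noteq> 0" by simp
  show ?thesis
    unfolding Qm_def
    by (simp add: mm_diff_l mm_diff_r mm_scale_l mm_scale_r J_J n algebra_simps)
qed

lemma L_Q: "laplacian E w ** Qm = laplacian E w"
  by (simp add: Qm_def mm_diff_l mm_scale_r L_J)
lemma Q_L: "Qm ** laplacian E w = laplacian E w"
  by (simp add: Qm_def mm_diff_r mm_scale_l J_L)
lemma Ev1_Q: "Ev1 v ** Qm = 0"
  by (simp add: Qm_def mm_diff_l mm_scale_r Ev1_J)


definition Np :: "'n::finite \<Rightarrow> 'n mat \<Rightarrow> 'n mat" where
  "Np v N = (\<chi> i j. if i = v \<or> j = v then 0 else N$i$j)"

lemma col:
  assumes jv: "j \<noteq> v" and c: "Mg E w v *v c = axis j 1"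
  shows "laplacian E w *v zv v c = axis j 1 - axis v 1"
proof -
  have nv: "(laplacian E w *v zv v c) $ i = (axis j 1) $ i" if "i \<noteq> v" for i
    using Mg_mulv_nv[OF that, of E w c] c by simp
  have "(\<Sum>i\<in>UNIV. (laplacian E w *v zv v c) $ i) = 0" by (rule sum_laplacian_mulv)
  moreover have "(\<Sum>i\<in>UNIV. (laplacian E w *v zv v c) $ i) =
      (laplacian E w *v zv v c) $ v + (\<Sum>i\<in>UNIV - {v}. (laplacian E w *v zv v c) $ i)"
    by (simp add: sum.remove)
  moreover have "(\<Sum>i\<in>UNIV - {v}. (laplacian E w *v zv v c) $ i) = (\<Sum>i\<in>UNIV - {v}. (axis j 1 :: real^'a) $ i)"
    using nv by (intro sum.cong) auto
  moreover have "(\<Sum>i\<in>UNIV - {v}. (axis j 1 :: real^'a) $ i) = 1"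
    using jv by (simp add: axis_def)
  ultimately have "(laplacian E w *v zv v c) $ v = -1" by linarith
  then show ?thesis using nv jv by (auto simp: vec_eq_iff axis_def)
qed

lemma L_Np:
  assumes MN: "Mg E w v ** N = mat 1"
  shows "laplacian E w ** Np v N = mat 1 - Ev1 v"
proof -
  have "(laplacian E w ** Np v N) $ i $ j = (mat 1 - Ev1 v) $ i $ j" for i j
  proof -
    have e: "(laplacian E w ** Np v N) $ i $ j = (laplacian E w *v (\<chi> k. Np v N $ k $ j)) $ i"
      by (simp add: matrix_matrix_mult_def matrix_vector_mult_def)
    show ?thesis
    proof (cases "j = v")
      case True
      then have "(\<chi> k. Np v N $ k $ j) = 0" by (simp add: Np_def vec_eq_iff)
      then show ?thesis using e True by (simp add: mat_def Ev1_def matrix_vector_mult_def)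
    next
      case False
      have z: "(\<chi> k. Np v N $ k $ j) = zv v (N *v axis j 1)"
        using False by (simp add: Np_def vec_eq_iff zv_def mulv_axis)
      have "Mg E w v *v (N *v axis j 1) = axis j 1"
        by (simp add: matrix_vector_mul_assoc MN)
      from col[OF False this] show ?thesis using e z False
        by (simp add: mat_def Ev1_def axis_def)
    qed
  qed
  then show ?thesis by (simp add: vec_eq_iff)
qed

lemma mp_unique:
  fixes A X Y :: "'n::finite mat"
  assumes X: "is_mp_pinv A X" and Y: "is_mp_pinv A Y"
  shows "X = Y"
proof -
  have AXA: "A ** X ** A = A" and XAX: "X ** A ** X = X" and AX: "transpose (A ** X) = A ** X"
    and XA: "transpose (X ** A) = X ** A" using X by (auto simp: is_mp_pinv_def)
  have AYA: "A ** Y ** A = A" and YAY: "Y ** A ** Y = Y" and AY: "transpose (A ** Y) = A ** Y"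
    and YA: "transpose (Y ** A) = Y ** A" using Y by (auto simp: is_mp_pinv_def)
  have 1: "A ** X = A ** Y"
  proof -
    have "A ** X = transpose (A ** X)" using AX by simp
    also have "\<dots> = transpose (A ** Y ** A ** X)" using AYA by simp
    also have "\<dots> = transpose (A ** X) ** transpose (A ** Y)"
      by (simp add: matrix_transpose_mul matrix_mul_assoc)
    also have "\<dots> = A ** X ** A ** Y" using AX AY by (simp add: matrix_mul_assoc)
    also have "\<dots> = A ** Y" using AXA by simp
    finally show ?thesis .
  qed
  have 2: "X ** A = Y ** A"
  proof -
    have "X ** A = transpose (X ** A)" using XA by simp
    also have "\<dots> = transpose (X ** A ** Y ** A)" using AYA by (metis matrix_mul_assoc)
    also have "\<dots> = transpose (Y ** A) ** transpose (X ** A)"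
      by (simp add: matrix_transpose_mul matrix_mul_assoc)
    also have "\<dots> = Y ** A ** X ** A" using XA YA by (simp add: matrix_mul_assoc)
    also have "\<dots> = Y ** A" using AXA by (metis matrix_mul_assoc)
    finally show ?thesis .
  qed
  have "X = X ** A ** X" using XAX by simp
  also have "\<dots> = Y ** A ** Y" using 1 2 by (metis matrix_mul_assoc)
  also have "\<dots> = Y" using YAY .
  finally show ?thesis .
qed

lemma pinv_exists:
  fixes E :: "'n::finite set set"
  assumes MN: "Mg E w v ** N = mat 1" and NM: "N ** Mg E w v = mat 1"
  shows "is_mp_pinv (laplacian E w) (Qm ** Np v N ** Qm)"
proof -
  let ?L = "laplacian E w" and ?X = "Qm ** Np v N ** Qm"
  have tN: "transpose N = N" by (rule inverse_symm[OF transpose_Mg MN NM])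
  have tNp: "transpose (Np v N) = Np v N"
    using tN by (simp add: Np_def transpose_def vec_eq_iff)
  have tX: "transpose ?X = ?X"
    by (simp add: matrix_transpose_mul tNp transpose_Q matrix_mul_assoc)
  have LX: "?L ** ?X = Qm"
  proof -
    have "?L ** ?X = (?L ** Qm) ** Np v N ** Qm" by (simp add: matrix_mul_assoc)
    also have "\<dots> = (mat 1 - Ev1 v) ** Qm" by (simp add: L_Q L_Np[OF MN])
    also have "\<dots> = Qm" by (simp add: mm_diff_r Ev1_Q)
    finally show ?thesis .
  qed
  have XL: "?X ** ?L = Qm"
  proof -
    have "?X ** ?L = transpose (?L ** ?X)"
      using tX by (simp add: matrix_transpose_mul transpose_laplacian)
    then show ?thesis using LX transpose_Q by simp
  qed
  have "?L ** ?X ** ?L = ?L" using LX Q_L by simp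
  moreover have "?X ** ?L ** ?X = ?X"
  proof -
    have "?X ** ?L ** ?X = Qm ** ?X" using XL by simp
    also have "\<dots> = (Qm ** Qm) ** Np v N ** Qm" by (simp add: matrix_mul_assoc)
    also have "\<dots> = ?X" by (simp add: Q_Q)
    finally show ?thesis .
  qed
  ultimately show ?thesis unfolding is_mp_pinv_def using LX XL transpose_Q by simp
qed

lemma resistance_via_z:
  fixes E :: "'n::finite set set"
  assumes P: "is_mp_pinv (laplacian E w) P" and z: "laplacian E w *v z = bvec u v"
  shows "resistance E w u v = inner z (bvec u v)"
proof -
  have mp: "mp_pinv (laplacian E w) = P"
    unfolding mp_pinv_def using P mp_unique by blast
  let ?L = "laplacian E w"
  have LPL: "?L ** P ** ?L = ?L" using P by (simp add: is_mp_pinv_def)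
  have r: "resistance E w u v = inner (?L *v z) (P *v (?L *v z))"
    by (simp add: resistance_def mp z)
  have t: "?L *v z = z v* ?L"
    by (metis transpose_laplacian transpose_matrix_vector)
  have d: "inner (z v* ?L) (P *v (?L *v z)) = inner z (?L *v (P *v (?L *v z)))"
    by (rule dot_lmul_matrix)
  have l: "?L *v (P *v (?L *v z)) = ?L *v z"
    by (simp add: matrix_vector_mul_assoc LPL matrix_mul_assoc)
  have "resistance E w u v = inner z (?L *v z)"
    using r d l by (simp only: t[symmetric])
  then show ?thesis by (simp add: z)
qed

lemma node_resistance_eq:
  fixes E :: "'n::finite set set"
  assumes MN: "Mg E w v ** N = mat 1" and NM: "N ** Mg E w v = mat 1"
  shows "node_resistance E w v = (\<Sum>u\<in>UNIV. if u = v then 0 else N$u$u)"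
proof -
  have P: "is_mp_pinv (laplacian E w) (Qm ** Np v N ** Qm)" by (rule pinv_exists[OF MN NM])
  have "resistance E w u v = (if u = v then 0 else N$u$u)" for u
  proof (cases "u = v")
    case True
    have "bvec u v = 0" using True by (simp add: bvec_def)
    then show ?thesis using True by (simp add: resistance_def)
  next
    case False
    have "Mg E w v *v (N *v axis u 1) = axis u 1"
      by (simp add: matrix_vector_mul_assoc MN)
    from col[OF False this] have "laplacian E w *v zv v (N *v axis u 1) = bvec u v"
      by (simp add: bvec_def)
    from resistance_via_z[OF P this] False show ?thesis
      by (simp add: bvec_def inner_diff_right inner_axis mulv_axis)
  qed
  then show ?thesis by (simp add: node_resistance_def)
qed


definition Pm :: "'n::finite \<Rightarrow> ('n set \<Rightarrow> real) \<Rightarrow> 'n set \<Rightarrow> 'n mat" where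
  "Pm v w e = (\<chi> i j. if i = j \<and> i \<noteq> v \<and> e = {i, v} then w e else 0)"

lemma wadj_insert: "e \<notin> F \<Longrightarrow> wadj (insert e F) w a b = wadj F w a b + (if {a, b} = e then w e else 0)"
  by (auto simp: wadj_def)

lemma Mg_insert:
  fixes F :: "'n::finite set set"
  assumes e: "e = {u, v}" and uv: "u \<noteq> v" and eF: "e \<notin> F"
  shows "Mg (insert e F) w v = Mg F w v + Pm v w e"
proof -
  have "Mg (insert e F) w v $ i $ j = (Mg F w v + Pm v w e) $ i $ j" for i j
  proof (cases "i = v \<or> j = v")
    case True
    then show ?thesis by (auto simp: Mg_def Pm_def)
  next
    case False
    then have iv: "i \<noteq> v" and jv: "j \<noteq> v" by auto
    have c: "({i, k} = e) = (i = u \<and> k = v)" for k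
      using iv uv e by (auto simp: doubleton_eq_iff)
    have s: "(\<Sum>k\<in>UNIV. wadj (insert e F) w i k) = (\<Sum>k\<in>UNIV. wadj F w i k) + (if i = u then w e else 0)"
    proof -
      have "(\<Sum>k\<in>UNIV. wadj (insert e F) w i k) = (\<Sum>k\<in>UNIV. wadj F w i k) + (\<Sum>k\<in>UNIV. if {i, k} = e then w e else 0)"
        by (simp add: wadj_insert[OF eF] sum.distrib)
      also have "(\<Sum>k\<in>UNIV. if {i, k} = e then w e else 0) = (\<Sum>k\<in>UNIV. if i = u \<and> k = v then w e else 0)"
        by (rule sum.cong) (auto simp only: c)
      also have "\<dots> = (if i = u then w e else 0)" by (cases "i = u") auto
      finally show ?thesis .
    qed
    have ij: "({i, j} = e) = False" using c jv by simp
    have p: "(e = {i, v}) = (i = u)" using e uv iv by (auto simp: doubleton_eq_iff)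
    have wij: "wadj (insert e F) w i j = wadj F w i j" using wadj_insert[OF eF] ij by simp
    show ?thesis using iv jv
      unfolding Mg_def Pm_def laplacian_def vec_lambda_beta vector_add_component s wij p by auto
  qed
  then show ?thesis by (simp add: vec_eq_iff)
qed

definition nonneg :: "'n::finite mat \<Rightarrow> bool" where
  "nonneg A \<longleftrightarrow> (\<forall>i j. A $ i $ j \<ge> 0)"

lemma nonneg_mul: "nonneg A \<Longrightarrow> nonneg B \<Longrightarrow> nonneg (A ** B)"
  by (auto simp: nonneg_def matrix_matrix_mult_def intro!: sum_nonneg)

lemma nonneg_add: "nonneg A \<Longrightarrow> nonneg B \<Longrightarrow> nonneg (A + B)"
  by (auto simp: nonneg_def)

lemma resolvent:
  fixes A B XA XB :: "'n::finite mat"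
  assumes "A ** XA = mat 1" "XB ** B = mat 1"
  shows "XA - XB = XB ** (B - A) ** XA"
proof -
  have "XB ** (B - A) ** XA = XB ** B ** XA - XB ** A ** XA"
    by (simp add: mm_diff_l mm_diff_r)
  also have "\<dots> = XA - XB" using assms by (simp add: matrix_mul_assoc[symmetric])
  finally show ?thesis by simp
qed

lemma key:
  fixes M0 Pe Pf X0 Xe Xf Xef :: "'n::finite mat"
  assumes "M0 ** X0 = mat 1" "X0 ** M0 = mat 1"
    "(M0 + Pe) ** Xe = mat 1" "Xe ** (M0 + Pe) = mat 1"
    "(M0 + Pf) ** Xf = mat 1" "Xf ** (M0 + Pf) = mat 1"
    "(M0 + Pf + Pe) ** Xef = mat 1" "Xef ** (M0 + Pf + Pe) = mat 1"
    and nn: "nonneg X0" "nonneg Xe" "nonneg Xf" "nonneg Xef" "nonneg Pe" "nonneg Pf"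
  shows "nonneg (X0 - Xe - Xf + Xef)"
proof -
  have r1: "X0 - Xe = Xe ** Pe ** X0"
    using resolvent[of M0 X0 Xe "M0 + Pe"] assms by simp
  have r2: "Xf - Xef = Xef ** Pe ** Xf"
    using resolvent[of "M0 + Pf" Xf Xef "M0 + Pf + Pe"] assms by simp
  have r3: "Xe - Xef = Xef ** Pf ** Xe"
    using resolvent[of "M0 + Pe" Xe Xef "M0 + Pf + Pe"] assms by (simp add: algebra_simps)
  have r4: "X0 - Xf = Xf ** Pf ** X0"
    using resolvent[of M0 X0 Xf "M0 + Pf"] assms by simp
  have "X0 - Xe - Xf + Xef = (X0 - Xe) - (Xf - Xef)" by simp
  also have "\<dots> = Xe ** Pe ** X0 - Xef ** Pe ** Xf" using r1 r2 by simp
  also have "\<dots> = (Xe - Xef) ** Pe ** X0 + Xef ** Pe ** (X0 - Xf)"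
    by (simp add: mm_diff_r mm_diff_l matrix_mul_assoc)
  also have "\<dots> = Xef ** Pf ** Xe ** Pe ** X0 + Xef ** Pe ** (Xf ** Pf ** X0)"
    using r3 r4 by simp
  finally have eq: "X0 - Xe - Xf + Xef = Xef ** Pf ** Xe ** Pe ** X0 + Xef ** Pe ** (Xf ** Pf ** X0)" .
  show ?thesis unfolding eq using nn
    by (intro nonneg_add nonneg_mul) auto
qed


definition trp :: "'n::finite \<Rightarrow> 'n mat \<Rightarrow> real" where
  "trp v N = (\<Sum>u\<in>UNIV. if u = v then 0 else N$u$u)"

lemma trp_nonneg: "nonneg A \<Longrightarrow> trp v A \<ge> 0"
  by (auto simp: trp_def nonneg_def intro!: sum_nonneg)

lemma trp_lin: "trp v (A - B - C + D) = trp v A - trp v B - trp v C + trp v D"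
proof -
  have "trp v (A - B - C + D) = (\<Sum>u\<in>UNIV. (if u = v then 0 else A$u$u) - (if u = v then 0 else B$u$u)
     - (if u = v then 0 else C$u$u) + (if u = v then 0 else D$u$u))"
    unfolding trp_def by (intro sum.cong) auto
  then show ?thesis by (simp add: trp_def sum.distrib sum_subtractf)
qed

lemma step:
  fixes E Ev S :: "'n::finite set set" and w :: "'n set \<Rightarrow> real" and v :: 'n
  assumes wpos: "\<forall>f\<in>E. w f > 0"
    and conn: "connected_graph E"
    and Ev: "\<forall>f\<in>Ev. \<exists>u. u \<noteq> v \<and> f = {u, v} \<and> f \<notin> E"
    and wEv: "\<forall>f\<in>Ev. w f > 0"
    and SEv: "S \<subseteq> Ev" and e: "e \<in> Ev" "e \<notin> S" and f: "f \<in> Ev" "f \<notin> S" and ef: "e \<noteq> f"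
  shows "node_resistance (E \<union> insert f S) w v - node_resistance (E \<union> insert e (insert f S)) w v
           \<le> node_resistance (E \<union> S) w v - node_resistance (E \<union> insert e S) w v"
proof -
  have good: "(\<forall>g\<in>E \<union> X. w g > 0) \<and> connected_graph (E \<union> X)" if "X \<subseteq> Ev" for X
  proof
    show "\<forall>g\<in>E \<union> X. w g > 0" using wpos wEv that by auto
    have "{(x, y). {x, y} \<in> E}\<^sup>* \<subseteq> {(x, y). {x, y} \<in> E \<union> X}\<^sup>*"
      by (rule rtrancl_mono) auto
    then show "connected_graph (E \<union> X)" using conn unfolding connected_graph_def by blast
  qed
  obtain ue where ue: "ue \<noteq> v" "e = {ue, v}" "e \<notin> E" using Ev e by blast
  obtain uf where uf: "uf \<noteq> v" "f = {uf, v}" "f \<notin> E" using Ev f by blast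
  let ?M0 = "Mg (E \<union> S) w v" and ?Pe = "Pm v w e" and ?Pf = "Pm v w f"
  have s1: "E \<union> insert e S = insert e (E \<union> S)" by auto
  have s2: "E \<union> insert f S = insert f (E \<union> S)" by auto
  have s3: "E \<union> insert e (insert f S) = insert e (E \<union> insert f S)" by auto
  have n1: "e \<notin> E \<union> S" using ue e by auto
  have n2: "f \<notin> E \<union> S" using uf f by auto
  have n3: "e \<notin> E \<union> insert f S" using ue e ef by auto
  have Me: "Mg (E \<union> insert e S) w v = ?M0 + ?Pe"
    unfolding s1 by (rule Mg_insert[OF ue(2) ue(1) n1])
  have Mf: "Mg (E \<union> insert f S) w v = ?M0 + ?Pf"
    unfolding s2 by (rule Mg_insert[OF uf(2) uf(1) n2])
  have Mef: "Mg (E \<union> insert e (insert f S)) w v = ?M0 + ?Pf + ?Pe"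
    unfolding s3 Mg_insert[OF ue(2) ue(1) n3] using Mf by simp
  have nPe: "nonneg ?Pe" using wEv e by (auto simp: nonneg_def Pm_def less_imp_le)
  have nPf: "nonneg ?Pf" using wEv f by (auto simp: nonneg_def Pm_def less_imp_le)
  have g0: "(\<forall>g\<in>E \<union> S. w g > 0) \<and> connected_graph (E \<union> S)" by (rule good[OF SEv])
  have ge: "(\<forall>g\<in>E \<union> insert e S. w g > 0) \<and> connected_graph (E \<union> insert e S)" by (rule good) (use SEv e in auto)
  have gf: "(\<forall>g\<in>E \<union> insert f S. w g > 0) \<and> connected_graph (E \<union> insert f S)" by (rule good) (use SEv f in auto)
  have gef: "(\<forall>g\<in>E \<union> insert e (insert f S). w g > 0) \<and> connected_graph (E \<union> insert e (insert f S))"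
    by (rule good) (use SEv e f in auto)
  obtain N0 where N0: "?M0 ** N0 = mat 1" "N0 ** ?M0 = mat 1" "\<forall>i j. N0$i$j \<ge> 0"
    using Mg_inv[of "E \<union> S" w v] g0 by blast
  obtain Ne where Ne: "Mg (E \<union> insert e S) w v ** Ne = mat 1" "Ne ** Mg (E \<union> insert e S) w v = mat 1" "\<forall>i j. Ne$i$j \<ge> 0"
    using Mg_inv[of "E \<union> insert e S" w v] ge by blast
  obtain Nf where Nf: "Mg (E \<union> insert f S) w v ** Nf = mat 1" "Nf ** Mg (E \<union> insert f S) w v = mat 1" "\<forall>i j. Nf$i$j \<ge> 0"
    using Mg_inv[of "E \<union> insert f S" w v] gf by blast
  obtain Nef where Nef: "Mg (E \<union> insert e (insert f S)) w v ** Nef = mat 1"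
      "Nef ** Mg (E \<union> insert e (insert f S)) w v = mat 1" "\<forall>i j. Nef$i$j \<ge> 0"
    using Mg_inv[of "E \<union> insert e (insert f S)" w v] gef by blast
  have "nonneg (N0 - Ne - Nf + Nef)"
    apply (rule key[of ?M0 N0 ?Pe Ne ?Pf Nf Nef])
    using N0 Ne Nf Nef Me Mf Mef nPe nPf by (auto simp: nonneg_def)
  then have "trp v (N0 - Ne - Nf + Nef) \<ge> 0" by (rule trp_nonneg)
  moreover have "node_resistance (E \<union> S) w v = trp v N0"
    using node_resistance_eq[OF N0(1,2)] by (simp add: trp_def)
  moreover have "node_resistance (E \<union> insert e S) w v = trp v Ne"
    using node_resistance_eq[OF Ne(1,2)] by (simp add: trp_def)
  moreover have "node_resistance (E \<union> insert f S) w v = trp v Nf"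
    using node_resistance_eq[OF Nf(1,2)] by (simp add: trp_def)
  moreover have "node_resistance (E \<union> insert e (insert f S)) w v = trp v Nef"
    using node_resistance_eq[OF Nef(1,2)] by (simp add: trp_def)
  ultimately show ?thesis by (simp add: trp_lin)
qed

theorem theorem2:
  fixes E Ev S T :: "'n::finite set set" and w :: "'n set \<Rightarrow> real" and v :: 'n and e :: "'n set"
  assumes edges: "\<forall>f\<in>E. \<exists>x y. x \<noteq> y \<and> f = {x, y}"
    and wpos: "\<forall>f\<in>E. w f > 0"
    and conn: "connected_graph E"
    and Ev: "\<forall>f\<in>Ev. \<exists>u. u \<noteq> v \<and> f = {u, v} \<and> f \<notin> E"
    and wEv: "\<forall>f\<in>Ev. w f > 0"
    and ST: "S \<subseteq> T" and TEv: "T \<subseteq> Ev"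
    and e: "e \<in> Ev - T"
  shows "node_resistance (E \<union> T) w v - node_resistance (E \<union> (T \<union> {e})) w v
           \<le> node_resistance (E \<union> S) w v - node_resistance (E \<union> (S \<union> {e})) w v"
proof -
  define D where "D X = node_resistance (E \<union> X) w v - node_resistance (E \<union> insert e X) w v" for X
  have fin: "finite T" by simp
  have gen: "U \<subseteq> Ev \<Longrightarrow> e \<notin> U \<Longrightarrow> D (S \<union> U) \<le> D S" if "finite U" for U
    using that
  proof (induction U rule: finite_induct)
    case empty then show ?case by simp
  next
    case (insert f U)
    then have IH: "D (S \<union> U) \<le> D S" by simp
    show ?case
    proof (cases "f \<in> S")
      case True
      then have "S \<union> insert f U = S \<union> U" by auto
      then show ?thesis using IH by simp
    next
      case False
      have "D (insert f (S \<union> U)) \<le> D (S \<union> U)"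
        unfolding D_def
        apply (rule step[OF wpos conn Ev wEv])
        using insert.prems insert.hyps ST TEv e False by auto
      then show ?thesis using IH by simp
    qed
  qed
  have "D (S \<union> T) \<le> D S" using gen[OF fin] TEv e by auto
  moreover have "S \<union> T = T" using ST by auto
  ultimately show ?thesis unfolding D_def by simp
qed

end
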